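(* Let $0<\nu\le1$ and $\tilde f(\xi)=\sum_{j\ge0}(j!)^{-1/\nu}|\xi|^j$ for $\xi\in\mathbb{R}^n$. Then for $\xi,\eta\in\mathbb{R}^n$: (A.9) $\tilde f(\xi)\le\tilde f(\xi-\eta)\tilde f(\eta)$ for all $\xi,\eta$; (A.10) $\tilde f(\xi)\le\tilde f(\xi-\eta)\exp(|\eta|^\nu)$ for $|\xi|\wedge|\eta|\le|\xi-\eta|$; (A.11) $(\tilde f(\eta)-\tilde f(\xi))|\eta|^{1-\nu}\le|\xi-\eta|\tilde f(\eta)$ for $|\xi|\le|\eta|$; (A.12) $|\tilde f(\xi)-\tilde f(\eta)||\eta|^{1-\nu}\le|\xi-\eta|^{1-\nu}\tilde f(\xi-\eta)\tilde f(\eta)$ for all $\xi,\eta$; (A.13) $|\tilde f(\xi)-\tilde f(\eta)||\eta|^{1-\nu}\le|\xi-\eta|^{1-\nu}(\exp(|\xi-\eta|^\nu)-1)\tilde f(\eta)$ for $|\xi|\wedge|\xi-\eta|\le|\eta|$; (A.14) $|\tilde f(\xi)-\tilde f(\eta)||\eta|^{1-\nu}\le C|\xi-\eta|^{1-\nu}(\tilde f(\xi-\eta)-1)\exp(|\eta|^\nu)$ for $|\xi|\wedge|\eta|\le|\xi-\eta|$, where one can take $C=1$ except in the region $|\xi|\le|\xi-\eta|\le|\eta|$, where $C=2^{1-\nu}$. Moreover, the function $\xi\mapsto\tilde f(\xi)\vee\tilde f(1)$ satisfies the same estimates (A.9)–(A.14) as $\tilde f$ (with $\tilde f$ replaced by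 it throughout).
   Context: $a\vee b=\max(a,b)$, $a\wedge b=\min(a,b)$; $\tilde f(1)$ denotes the value at $|\xi|=1$. *)

theory Defs
  imports "HOL-Analysis.Analysis"
begin

definition ftr :: "real \<Rightarrow> real \<Rightarrow> real" where
  "ftr nu r = (\<Sum>j. (fact j) powr (- 1 / nu) * r ^ j)"

definition ftilde :: "real \<Rightarrow> real ^ 'n \<Rightarrow> real" where
  "ftilde nu xi = ftr nu (norm xi)"

text \<open>Real power with the usual convention x^0 = 1 (also for x = 0);
  Isabelle's powr has 0 powr a = 0 for all a.\<close>
definition rpow :: "real \<Rightarrow> real \<Rightarrow> real" where
  "rpow x a = (if a = 0 then 1 else x powr a)"

definition A_estimates :: "real \<Rightarrow> (real ^ 'n \<Rightarrow> real) \<Rightarrow> bool" where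
  "A_estimates nu F \<longleftrightarrow>
     (\<forall>xi eta. F xi \<le> F (xi - eta) * F eta) \<and>
     (\<forall>xi eta. min (norm xi) (norm eta) \<le> norm (xi - eta) \<longrightarrow>
        F xi \<le> F (xi - eta) * exp (norm eta powr nu)) \<and>
     (\<forall>xi eta. norm xi \<le> norm eta \<longrightarrow>
        (F eta - F xi) * rpow (norm eta) (1 - nu) \<le> norm (xi - eta) * F eta) \<and>
     (\<forall>xi eta. \<bar>F xi - F eta\<bar> * rpow (norm eta) (1 - nu)
        \<le> rpow (norm (xi - eta)) (1 - nu) * F (xi - eta) * F eta) \<and>
     (\<forall>xi eta. min (norm xi) (norm (xi - eta)) \<le> norm eta \<longrightarrow>
        \<bar>F xi - F eta\<bar> * rpow (norm eta) (1 - nu)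
        \<le> rpow (norm (xi - eta)) (1 - nu) * (exp (norm (xi - eta) powr nu) - 1) * F eta) \<and>
     (\<forall>xi eta. min (norm xi) (norm eta) \<le> norm (xi - eta) \<longrightarrow>
        \<bar>F xi - F eta\<bar> * rpow (norm eta) (1 - nu)
        \<le> (if norm xi \<le> norm (xi - eta) \<and> norm (xi - eta) \<le> norm eta
            then 2 powr (1 - nu) else 1)
           * rpow (norm (xi - eta)) (1 - nu) * (F (xi - eta) - 1) * exp (norm eta powr nu))"

end

theory Submission
  imports Defs
begin

definition AA :: "real \<Rightarrow> nat \<Rightarrow> real" where
  "AA nu n = (fact n) powr (- 1 / nu)"

definition TT :: "real \<Rightarrow> real \<Rightarrow> nat \<Rightarrow> real" where
  "TT nu x n = AA nu n * x ^ n"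

definition EE :: "real \<Rightarrow> real \<Rightarrow> nat \<Rightarrow> real" where
  "EE nu y m = (y powr nu) ^ m / fact m"

definition Lf :: "nat \<Rightarrow> real" where
  "Lf n = ln (fact n)"

lemma exp_comb:
  fixes nu K X U V :: real
  assumes "0 \<le> nu" "nu \<le> 1" "0 < K" "X \<le> ln K + (1 - nu) * U + nu * V"
  shows "exp X \<le> K * ((1 - nu) * exp U + nu * exp V)"
proof -
  have "exp X \<le> exp (ln K + ((1 - nu) * U + nu * V))"
    using assms(4) by (simp add: algebra_simps)
  also have "\<dots> = K * exp ((1 - nu) * U + nu * V)"
    using assms(3) by (simp add: exp_add)
  also have "exp ((1 - nu) * U + nu * V) \<le> (1 - nu) * exp U + nu * exp V"
    using convex_onD[OF exp_convex, of nu U V] assms(1,2) by simp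
  hence "K * exp ((1 - nu) * U + nu * V) \<le> K * ((1 - nu) * exp U + nu * exp V)"
    using assms(3) by (intro mult_left_mono) auto
  finally show ?thesis .
qed

lemma pow_exp: "0 < (x::real) \<Longrightarrow> x ^ i = exp (real i * ln x)"
  by (simp add: exp_of_nat_mult)

lemma Lf_nonneg: "0 \<le> Lf n"
  by (simp add: Lf_def)

lemma Lf_Suc: "Lf (Suc n) = ln (real (Suc n)) + Lf n"
  by (simp add: Lf_def ln_mult del: of_nat_Suc)

lemma binom_exp: "i \<le> n \<Longrightarrow> real (n choose i) = exp (Lf n - Lf i - Lf (n - i))"
proof -
  assume "i \<le> n"
  from binomial_fact_lemma[OF this]
  have "real (fact i * fact (n - i) * (n choose i)) = real (fact n)"
    by (simp only: binomial_fact_lemma[OF \<open>i \<le> n\<close>])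
  hence e: "fact i * fact (n - i) * real (n choose i) = (fact n :: real)"
    by (simp only: of_nat_mult of_nat_fact)
  have "real (n choose i) > 0" using \<open>i \<le> n\<close> by simp
  have "ln (fact n :: real) = ln (fact i * fact (n - i) * real (n choose i))" by (simp only: e)
  also have "\<dots> = ln (fact i) + ln (fact (n - i)) + ln (real (n choose i))"
    using \<open>real (n choose i) > 0\<close> by (simp add: ln_mult)
  finally have "ln (fact i) + ln (fact (n - i)) + ln (real (n choose i)) = ln (fact n :: real)" ..
  hence "ln (real (n choose i)) = Lf n - Lf i - Lf (n - i)" by (simp add: Lf_def)
  thus ?thesis using \<open>real (n choose i) > 0\<close> by (metis exp_ln)
qed


lemma H1:
  fixes U V :: "nat \<Rightarrow> real"
  assumes U: "\<And>i. 0 \<le> U i" and V: "\<And>j. 0 \<le> V j" and sU: "summable U" and sV: "summable V"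
  shows "(\<Sum>n<N. \<Sum>i\<le>n. U i * V (n - i)) \<le> suminf U * suminf V"
proof -
  have "(\<Sum>n<N. \<Sum>i\<le>n. U i * V (n - i)) = (\<Sum>(i,j)\<in>{(i,j). i + j < N}. U i * V j)"
    by (rule sum.triangle_reindex[symmetric])
  also have "\<dots> \<le> (\<Sum>(i,j)\<in>{..<N} \<times> {..<N}. U i * V j)"
    by (rule sum_mono2) (auto intro: mult_nonneg_nonneg U V)
  also have "\<dots> = (\<Sum>i<N. U i) * (\<Sum>j<N. V j)"
    by (simp add: sum_product sum.cartesian_product)
  also have "\<dots> \<le> suminf U * suminf V"
    by (intro mult_mono sum_le_suminf sU sV suminf_nonneg sum_nonneg U V) auto
  finally show ?thesis .
qed

lemma H1':
  fixes U V :: "nat \<Rightarrow> real"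
  assumes U: "\<And>i. 0 \<le> U i" and V: "\<And>j. 0 \<le> V j" and sU: "summable U" and sV: "summable V"
  shows "(\<Sum>n<N. \<Sum>i<n. U i * V (n - i)) \<le> suminf U * (suminf V - V 0)"
proof -
  define V' where "V' j = (if j = 0 then 0 else V j)" for j
  have V': "\<And>j. 0 \<le> V' j" by (simp add: V'_def V)
  have "V' = (\<lambda>j. V j - (if j = 0 then V 0 else 0))" by (auto simp: V'_def fun_eq_iff)
  moreover have "(\<lambda>j. V j - (if j = 0 then V 0 else 0)) sums (suminf V - V 0)"
    by (intro sums_diff summable_sums[OF sV] sums_single)
  ultimately have sV': "summable V'" and eV': "suminf V' = suminf V - V 0"
    by (auto simp: sums_iff)
  have "(\<Sum>i<n. U i * V (n - i)) = (\<Sum>i\<le>n. U i * V' (n - i))" for n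
  proof -
    have "(\<Sum>i\<le>n. U i * V' (n - i)) = (\<Sum>i<n. U i * V' (n - i)) + U n * V' 0"
      by (simp add: lessThan_Suc_atMost[symmetric])
    also have "\<dots> = (\<Sum>i<n. U i * V (n - i))"
      by (auto simp: V'_def intro!: sum.cong)
    finally show ?thesis by simp
  qed
  hence "(\<Sum>n<N. \<Sum>i<n. U i * V (n - i)) = (\<Sum>n<N. \<Sum>i\<le>n. U i * V' (n - i))" by simp
  also have "\<dots> \<le> suminf U * suminf V'" by (rule H1[OF U V' sU sV'])
  finally show ?thesis using eV' by simp
qed

lemma H2':
  fixes U V :: "nat \<Rightarrow> real"
  assumes U: "\<And>i. 0 \<le> U i" and V: "\<And>j. 0 \<le> V j" and sU: "summable U" and sV: "summable V"
  shows "(\<Sum>n<N. U n * (\<Sum>i<n. V (n - i))) \<le> suminf U * (suminf V - V 0)"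
proof -
  have sS: "summable (\<lambda>i. V (Suc i))" using sV by (simp add: summable_Suc_iff)
  have "(\<Sum>i<n. V (n - i)) \<le> suminf V - V 0" for n
  proof -
    have "(\<Sum>i<n. V (n - i)) = (\<Sum>i<n. (\<lambda>j. V (Suc j)) (n - Suc i))"
      by (rule sum.cong) (auto simp: Suc_diff_Suc)
    also have "\<dots> = (\<Sum>i<n. V (Suc i))" by (rule sum.nat_diff_reindex)
    also have "\<dots> \<le> (\<Sum>i. V (Suc i))" by (rule sum_le_suminf[OF sS]) (auto intro: V)
    also have "\<dots> = suminf V - V 0" by (rule suminf_split_head[OF sV])
    finally show ?thesis .
  qed
  hence "(\<Sum>n<N. U n * (\<Sum>i<n. V (n - i))) \<le> (\<Sum>n<N. U n * (suminf V - V 0))"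
    by (intro sum_mono mult_left_mono U)
  also have "\<dots> = (\<Sum>n<N. U n) * (suminf V - V 0)" by (simp add: sum_distrib_right)
  also have "\<dots> \<le> suminf U * (suminf V - V 0)"
  proof (rule mult_right_mono)
    show "sum U {..<N} \<le> suminf U" by (rule sum_le_suminf[OF sU]) (auto intro: U)
    have "(\<Sum>i. V (Suc i)) \<ge> 0" by (rule suminf_nonneg[OF sS]) (rule V)
    thus "0 \<le> suminf V - V 0" using suminf_split_head[OF sV] by simp
  qed
  finally show ?thesis .
qed

lemma H2'':
  fixes U V :: "nat \<Rightarrow> real"
  assumes U: "\<And>i. 0 \<le> U i" and V: "\<And>j. 0 \<le> V j" and sU: "summable U" and sV: "summable V"
  shows "(\<Sum>n<N. U n * (\<Sum>i<n. V i)) \<le> (suminf U - U 0) * suminf V"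
proof -
  define U' where "U' j = (if j = 0 then 0 else U j)" for j
  have U': "\<And>j. 0 \<le> U' j" by (simp add: U'_def U)
  have "U' = (\<lambda>j. U j - (if j = 0 then U 0 else 0))" by (auto simp: U'_def fun_eq_iff)
  moreover have "(\<lambda>j. U j - (if j = 0 then U 0 else 0)) sums (suminf U - U 0)"
    by (intro sums_diff summable_sums[OF sU] sums_single)
  ultimately have sU': "summable U'" and eU': "suminf U' = suminf U - U 0"
    by (auto simp: sums_iff)
  have "U n * (\<Sum>i<n. V i) \<le> U' n * suminf V" for n
  proof (cases "n = 0")
    case False
    have "(\<Sum>i<n. V i) \<le> suminf V" by (rule sum_le_suminf[OF sV]) (auto intro: V)
    thus ?thesis using False U by (simp add: U'_def mult_left_mono)
  qed (simp add: U'_def)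
  hence "(\<Sum>n<N. U n * (\<Sum>i<n. V i)) \<le> (\<Sum>n<N. U' n * suminf V)" by (intro sum_mono)
  also have "\<dots> = (\<Sum>n<N. U' n) * suminf V" by (simp add: sum_distrib_right)
  also have "\<dots> \<le> suminf U' * suminf V"
    by (intro mult_right_mono sum_le_suminf sU' suminf_nonneg sV V) (auto intro: U')
  finally show ?thesis using eU' by simp
qed

lemma H3:
  fixes U V :: "nat \<Rightarrow> real"
  assumes U: "\<And>i. 0 \<le> U i" and V: "\<And>j. 0 \<le> V j" and sU: "summable U" and sV: "summable V"
  shows "(\<Sum>n<N. \<Sum>i<n. U (Suc i) * V (n - Suc i)) \<le> suminf U * suminf V"
proof -
  define h where "h n = (\<Sum>i<n. U (Suc i) * V (n - Suc i))" for n
  have sS: "summable (\<lambda>i. U (Suc i))" using sU by (simp add: summable_Suc_iff)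
  have h0: "0 \<le> h n" for n by (simp add: h_def sum_nonneg mult_nonneg_nonneg U V)
  have "(\<Sum>n<N. h n) \<le> (\<Sum>n<Suc N. h n)" by (simp add: h0)
  also have "\<dots> = h 0 + (\<Sum>m<N. h (Suc m))" by (rule sum.lessThan_Suc_shift)
  also have "\<dots> = (\<Sum>m<N. \<Sum>i\<le>m. U (Suc i) * V (m - i))"
    by (simp add: h_def lessThan_Suc_atMost)
  also have "\<dots> \<le> (\<Sum>i. U (Suc i)) * suminf V" by (rule H1[OF U V sS sV])
  also have "\<dots> \<le> suminf U * suminf V"
  proof (rule mult_right_mono)
    show "(\<Sum>i. U (Suc i)) \<le> suminf U" using suminf_split_head[OF sU] U[of 0] by simp
    show "0 \<le> suminf V" by (rule suminf_nonneg[OF sV V])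
  qed
  finally show ?thesis by (simp add: h_def)
qed

lemma core_pattern:
  fixes F P Q :: "nat \<Rightarrow> nat \<Rightarrow> real"
  assumes "0 \<le> nu" "nu \<le> 1" "0 \<le> K"
    and P: "\<And>n i. 0 \<le> P n i" and Q: "\<And>n i. 0 \<le> Q n i"
    and FPQ: "\<And>n i. i < n \<Longrightarrow> F n i \<le> K * ((1 - nu) * P n i + nu * Q n i)"
    and BP: "(\<Sum>n<N. \<Sum>i<n. P n i) \<le> B" and BQ: "(\<Sum>n<N. \<Sum>i<n. Q n i) \<le> B"
  shows "(\<Sum>n<N. \<Sum>i<n. F n i) \<le> K * B"
proof -
  have "(\<Sum>n<N. \<Sum>i<n. F n i) \<le> (\<Sum>n<N. \<Sum>i<n. K * ((1 - nu) * P n i + nu * Q n i))"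
    by (intro sum_mono FPQ) auto
  also have "\<dots> = K * ((1 - nu) * (\<Sum>n<N. \<Sum>i<n. P n i) + nu * (\<Sum>n<N. \<Sum>i<n. Q n i))"
    by (simp add: sum.distrib sum_distrib_left distrib_left mult.assoc)
  also have "\<dots> \<le> K * ((1 - nu) * B + nu * B)"
    using assms by (intro mult_left_mono add_mono) auto
  finally show ?thesis by (simp add: algebra_simps)
qed

lemma choose_le_Suc: "n choose i \<le> Suc n choose i"
  by (cases i) simp_all

lemma choose_ge: "i + 1 \<le> (i + Suc j) choose i"
proof (induction j)
  case 0
  then show ?case by (simp add: binomial_Suc_n)
next
  case (Suc j)
  then show ?case using choose_le_Suc[of "i + Suc j" i] by simp
qed

context
  fixes nu :: real
  assumes nu0: "0 < nu" and nu1: "nu \<le> 1"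
begin

lemma AA_exp: "AA nu n = exp (- (1 / nu) * Lf n)"
  by (simp add: AA_def powr_def Lf_def)

lemma AA_pos: "0 < AA nu n"
  by (simp add: AA_exp)

lemma TT_exp: "0 < x \<Longrightarrow> TT nu x n = exp (- (1 / nu) * Lf n + real n * ln x)"
  by (simp only: TT_def AA_exp pow_exp exp_add)

lemma EE_exp: "0 < y \<Longrightarrow> EE nu y m = exp (nu * real m * ln y - Lf m)"
  by (simp add: EE_def pow_exp Lf_def exp_diff powr_def mult_ac)

lemma AA_le: "AA nu n \<le> 1 / fact n"
proof -
  have "1 \<le> 1 / nu" using nu0 nu1 by simp
  have "fact n powr 1 \<le> fact n powr (1 / nu)"
    by (rule powr_mono) (use \<open>1 \<le> 1 / nu\<close> in auto)
  hence "1 / fact n powr (1 / nu) \<le> 1 / fact n" 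
    by (simp add: divide_simps)
  thus ?thesis by (simp add: AA_def powr_minus_divide)
qed

lemma TT_nonneg: "0 \<le> x \<Longrightarrow> 0 \<le> TT nu x n"
  by (simp add: TT_def AA_pos less_imp_le)

lemma summable_TT: "0 \<le> x \<Longrightarrow> summable (TT nu x)"
proof -
  assume x: "0 \<le> x"
  have "summable (\<lambda>n. x ^ n /\<^sub>R fact n)" using exp_converges sums_summable by blast
  hence s: "summable (\<lambda>n. x ^ n / fact n)" by (simp add: divide_inverse mult.commute)
  show ?thesis
  proof (rule summable_comparison_test'[OF s])
    fix n
    have "TT nu x n \<le> 1 / fact n * x ^ n"
      unfolding TT_def by (rule mult_right_mono[OF AA_le]) (use x in simp)
    thus "norm (TT nu x n) \<le> x ^ n / fact n" using TT_nonneg[OF x] by simp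
  qed
qed

lemma EE_sums: "EE nu y sums exp (y powr nu)"
proof -
  have "EE nu y = (\<lambda>n. (y powr nu) ^ n /\<^sub>R fact n)"
    by (simp add: EE_def fun_eq_iff divide_inverse mult.commute)
  thus ?thesis using exp_converges[of "y powr nu"] by simp
qed

lemma EE_nonneg: "0 \<le> EE nu y m"
  by (simp add: EE_def)

lemma ftr_eq: "ftr nu x = suminf (TT nu x)"
  unfolding ftr_def TT_def[abs_def] AA_def ..

lemma pp_exp: "0 < x \<Longrightarrow> rpow x (1 - nu) = exp ((1 - nu) * ln x)"
  by (simp add: rpow_def powr_def)

lemma C1_term:
  assumes y: "0 < y" and yx: "y \<le> x" and m: "1 \<le> m"
  shows "rpow x (1 - nu) * (AA nu (i + m) * real ((i + m) choose i) * x ^ i * y ^ m)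
    \<le> rpow y (1 - nu) * ((1 - nu) * (TT nu x (i + m) * EE nu y m) + nu * (TT nu x i * EE nu y m))"
proof -
  have x: "0 < x" using y yx by simp
  have bg: "ln y \<le> ln x" using y yx by simp
  have L: "rpow x (1 - nu) * (AA nu (i + m) * real ((i + m) choose i) * x ^ i * y ^ m)
     = exp ((1 - nu) * ln x + (- (1 / nu) * Lf (i + m) + (Lf (i + m) - Lf i - Lf m) + real i * ln x + real m * ln y))"
    by (simp add: pp_exp[OF x] AA_exp binom_exp pow_exp[OF x] pow_exp[OF y] exp_add exp_diff exp_minus field_simps)
  have P: "TT nu x (i + m) * EE nu y m = exp ((- (1 / nu) * Lf (i + m) + real (i + m) * ln x) + (nu * real m * ln y - Lf m))"
    by (simp add: TT_exp[OF x] EE_exp[OF y] exp_add)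
  have Q: "TT nu x i * EE nu y m = exp ((- (1 / nu) * Lf i + real i * ln x) + (nu * real m * ln y - Lf m))"
    by (simp add: TT_exp[OF x] EE_exp[OF y] exp_add)
  have key: "(1 - nu) * ln x + (- (1 / nu) * Lf (i + m) + (Lf (i + m) - Lf i - Lf m) + real i * ln x + real m * ln y)
     \<le> ln (exp ((1 - nu) * ln y)) + (1 - nu) * ((- (1 / nu) * Lf (i + m) + real (i + m) * ln x) + (nu * real m * ln y - Lf m))
        + nu * ((- (1 / nu) * Lf i + real i * ln x) + (nu * real m * ln y - Lf m))"
  proof -
    have "ln (exp ((1 - nu) * ln y)) + (1 - nu) * ((- (1 / nu) * Lf (i + m) + real (i + m) * ln x) + (nu * real m * ln y - Lf m))
        + nu * ((- (1 / nu) * Lf i + real i * ln x) + (nu * real m * ln y - Lf m))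
       - ((1 - nu) * ln x + (- (1 / nu) * Lf (i + m) + (Lf (i + m) - Lf i - Lf m) + real i * ln x + real m * ln y))
       = (1 - nu) * (real m - 1) * (ln x - ln y)"
      using nu0 by (simp add: field_simps)
    moreover have "0 \<le> (1 - nu) * (real m - 1) * (ln x - ln y)"
      using nu1 m bg by (intro mult_nonneg_nonneg) auto
    ultimately show ?thesis by linarith
  qed
  show ?thesis unfolding L P Q pp_exp[OF y]
    by (rule exp_comb[OF less_imp_le[OF nu0] nu1 exp_gt_zero key])
qed

lemma C2_term:
  assumes x: "0 < x" and xy: "x \<le> y" and q: "0 \<le> q"
  shows "exp (q * ln x) * (AA nu (i + m) * real ((i + m) choose i) * x ^ i * y ^ m)
    \<le> exp (q * ln y) * ((1 - nu) * (EE nu x i * TT nu y (i + m)) + nu * (EE nu x i * TT nu y m))"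
proof -
  have y: "0 < y" using x xy by simp
  have bg: "ln x \<le> ln y" using x xy by simp
  have L: "exp (q * ln x) * (AA nu (i + m) * real ((i + m) choose i) * x ^ i * y ^ m)
     = exp (q * ln x + (- (1 / nu) * Lf (i + m) + (Lf (i + m) - Lf i - Lf m) + real i * ln x + real m * ln y))"
    by (simp add: AA_exp binom_exp pow_exp[OF x] pow_exp[OF y] exp_add exp_diff exp_minus field_simps)
  have P: "EE nu x i * TT nu y (i + m) = exp ((nu * real i * ln x - Lf i) + (- (1 / nu) * Lf (i + m) + real (i + m) * ln y))"
    by (simp add: TT_exp[OF y] EE_exp[OF x] exp_add)
  have Q: "EE nu x i * TT nu y m = exp ((nu * real i * ln x - Lf i) + (- (1 / nu) * Lf m + real m * ln y))"
    by (simp add: TT_exp[OF y] EE_exp[OF x] exp_add)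
  have key: "q * ln x + (- (1 / nu) * Lf (i + m) + (Lf (i + m) - Lf i - Lf m) + real i * ln x + real m * ln y)
     \<le> ln (exp (q * ln y)) + (1 - nu) * ((nu * real i * ln x - Lf i) + (- (1 / nu) * Lf (i + m) + real (i + m) * ln y))
        + nu * ((nu * real i * ln x - Lf i) + (- (1 / nu) * Lf m + real m * ln y))"
  proof -
    have "ln (exp (q * ln y)) + (1 - nu) * ((nu * real i * ln x - Lf i) + (- (1 / nu) * Lf (i + m) + real (i + m) * ln y))
        + nu * ((nu * real i * ln x - Lf i) + (- (1 / nu) * Lf m + real m * ln y))
       - (q * ln x + (- (1 / nu) * Lf (i + m) + (Lf (i + m) - Lf i - Lf m) + real i * ln x + real m * ln y))
       = (q + (1 - nu) * real i) * (ln y - ln x)"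
      using nu0 by (simp add: field_simps)
    moreover have "0 \<le> (q + (1 - nu) * real i) * (ln y - ln x)"
      using nu1 q bg by (intro mult_nonneg_nonneg) auto
    ultimately show ?thesis by linarith
  qed
  show ?thesis unfolding L P Q
    by (rule exp_comb[OF less_imp_le[OF nu0] nu1 exp_gt_zero key])
qed

lemma C0_term:
  assumes x: "0 < x" and y: "0 < y"
  shows "rpow x (1 - nu) * (AA nu (i + Suc j) * real ((i + Suc j) choose i) * x ^ i * y ^ Suc j)
    \<le> rpow y (1 - nu) * ((1 - nu) * (TT nu x (Suc i) * TT nu y j) + nu * (TT nu x i * TT nu y (Suc j)))"
proof -
  have L: "rpow x (1 - nu) * (AA nu (i + Suc j) * real ((i + Suc j) choose i) * x ^ i * y ^ Suc j)
     = exp ((1 - nu) * ln x + (- (1 / nu) * Lf (i + Suc j) + (Lf (i + Suc j) - Lf i - Lf (Suc j)) + real i * ln x + real (Suc j) * ln y))"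
    by (simp only: pp_exp[OF x] AA_exp binom_exp[OF le_add1] pow_exp[OF x] pow_exp[OF y] exp_add exp_diff
         add_diff_cancel_left')
  have P: "TT nu x (Suc i) * TT nu y j = exp ((- (1 / nu) * Lf (Suc i) + real (Suc i) * ln x) + (- (1 / nu) * Lf j + real j * ln y))"
    by (simp only: TT_exp[OF x] TT_exp[OF y] exp_add)
  have Q: "TT nu x i * TT nu y (Suc j) = exp ((- (1 / nu) * Lf i + real i * ln x) + (- (1 / nu) * Lf (Suc j) + real (Suc j) * ln y))"
    by (simp only: TT_exp[OF x] TT_exp[OF y] exp_add)
  have hC: "ln (real (Suc i)) \<le> Lf (i + Suc j) - Lf i - Lf (Suc j)"
  proof -
    have "real (i + 1) \<le> real ((i + Suc j) choose i)" using choose_ge[of i j] by linarith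
    hence "ln (real (Suc i)) \<le> ln (real ((i + Suc j) choose i))" by simp
    also have "\<dots> = Lf (i + Suc j) - Lf i - Lf (Suc j)" by (simp add: binom_exp)
    finally show ?thesis .
  qed
  have hj: "0 \<le> ln (real (Suc j))" by simp
  have key: "(1 - nu) * ln x + (- (1 / nu) * Lf (i + Suc j) + (Lf (i + Suc j) - Lf i - Lf (Suc j)) + real i * ln x + real (Suc j) * ln y)
     \<le> ln (exp ((1 - nu) * ln y)) + (1 - nu) * ((- (1 / nu) * Lf (Suc i) + real (Suc i) * ln x) + (- (1 / nu) * Lf j + real j * ln y))
        + nu * ((- (1 / nu) * Lf i + real i * ln x) + (- (1 / nu) * Lf (Suc j) + real (Suc j) * ln y))"
  proof -
    have e1: "Lf (Suc i) = ln (real (Suc i)) + Lf i" by (rule Lf_Suc)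
    have e2: "Lf (Suc j) = ln (real (Suc j)) + Lf j" by (rule Lf_Suc)
    have "ln (exp ((1 - nu) * ln y)) + (1 - nu) * ((- (1 / nu) * Lf (Suc i) + real (Suc i) * ln x) + (- (1 / nu) * Lf j + real j * ln y))
        + nu * ((- (1 / nu) * Lf i + real i * ln x) + (- (1 / nu) * Lf (Suc j) + real (Suc j) * ln y))
       - ((1 - nu) * ln x + (- (1 / nu) * Lf (i + Suc j) + (Lf (i + Suc j) - Lf i - Lf (Suc j)) + real i * ln x + real (Suc j) * ln y))
       = (1 / nu - 1) * ((Lf (i + Suc j) - Lf i - Lf (Suc j)) - ln (real (Suc i)) + ln (real (Suc j)))"
      using nu0 unfolding e1 e2 by (simp add: field_simps)
    moreover have "0 \<le> (1 / nu - 1) * ((Lf (i + Suc j) - Lf i - Lf (Suc j)) - ln (real (Suc i)) + ln (real (Suc j)))"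
      using nu0 nu1 hC hj by (intro mult_nonneg_nonneg) auto
    ultimately show ?thesis by linarith
  qed
  show ?thesis unfolding L P Q pp_exp[OF y]
    by (rule exp_comb[OF less_imp_le[OF nu0] nu1 exp_gt_zero key])
qed

lemma L2_term:
  assumes y: "0 < y" and x: "0 \<le> x" and xy: "x \<le> y"
  shows "rpow y (1 - nu) * (AA nu (Suc j) * (y ^ Suc j - x ^ Suc j))
    \<le> (y - x) * ((1 - nu) * TT nu y (Suc j) + nu * TT nu y j)"
proof -
  have pd: "y ^ Suc j - x ^ Suc j \<le> (y - x) * (real (Suc j) * y ^ j)"
  proof -
    have "y ^ Suc j - x ^ Suc j = (y - x) * (\<Sum>p<Suc j. y ^ p * x ^ (j - p))"
      by (rule diff_power_eq_sum)
    also have "\<dots> \<le> (y - x) * (\<Sum>p<Suc j. y ^ j)"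
    proof (intro mult_left_mono sum_mono)
      fix p assume "p \<in> {..<Suc j}"
      hence "p \<le> j" by simp
      have "y ^ p * x ^ (j - p) \<le> y ^ p * y ^ (j - p)"
        using x xy y by (intro mult_left_mono power_mono) auto
      also have "\<dots> = y ^ j" using \<open>p \<le> j\<close> by (simp add: power_add[symmetric])
      finally show "y ^ p * x ^ (j - p) \<le> y ^ j" .
    qed (use xy in simp)
    finally show ?thesis by simp
  qed
  have L: "rpow y (1 - nu) * (AA nu (Suc j) * (real (Suc j) * y ^ j))
     = exp ((1 - nu) * ln y + (- (1 / nu) * Lf (Suc j) + ln (real (Suc j)) + real j * ln y))"
    unfolding exp_add by (simp add: pp_exp[OF y] AA_exp pow_exp[OF y] mult_ac del: of_nat_Suc)
  have P: "TT nu y (Suc j) = exp (- (1 / nu) * Lf (Suc j) + real (Suc j) * ln y)" by (rule TT_exp[OF y])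
  have Q: "TT nu y j = exp (- (1 / nu) * Lf j + real j * ln y)" by (rule TT_exp[OF y])
  have key: "(1 - nu) * ln y + (- (1 / nu) * Lf (Suc j) + ln (real (Suc j)) + real j * ln y)
     \<le> ln 1 + (1 - nu) * (- (1 / nu) * Lf (Suc j) + real (Suc j) * ln y) + nu * (- (1 / nu) * Lf j + real j * ln y)"
  proof -
    have e1: "Lf (Suc j) = ln (real (Suc j)) + Lf j" by (rule Lf_Suc)
    show ?thesis using nu0 unfolding e1 by (simp add: field_simps)
  qed
  have "rpow y (1 - nu) * (AA nu (Suc j) * (y ^ Suc j - x ^ Suc j))
      \<le> rpow y (1 - nu) * (AA nu (Suc j) * ((y - x) * (real (Suc j) * y ^ j)))"
    by (intro mult_left_mono pd) (auto simp: rpow_def AA_pos less_imp_le)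
  also have "\<dots> = (y - x) * (rpow y (1 - nu) * (AA nu (Suc j) * (real (Suc j) * y ^ j)))"
    by (simp add: mult_ac)
  also have "\<dots> \<le> (y - x) * (1 * ((1 - nu) * TT nu y (Suc j) + nu * TT nu y j))"
    unfolding L P Q
    by (intro mult_left_mono exp_comb[OF less_imp_le[OF nu0] nu1 _ key]) (use xy in auto)
  finally show ?thesis by simp
qed

lemma A9_term:
  "AA nu (i + m) * real ((i + m) choose i) \<le> AA nu i * AA nu m"
proof -
  have C: "0 \<le> Lf (i + m) - Lf i - Lf m"
  proof -
    have "0 < (i + m) choose i" by simp
    hence "1 \<le> real ((i + m) choose i)" by linarith
    hence "0 \<le> ln (real ((i + m) choose i))" by simp
    thus ?thesis by (simp add: binom_exp)
  qed
  have "- (1 / nu) * Lf (i + m) + (Lf (i + m) - Lf i - Lf m) \<le> - (1 / nu) * Lf i + - (1 / nu) * Lf m"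
  proof -
    have "(- (1 / nu) * Lf i + - (1 / nu) * Lf m) - (- (1 / nu) * Lf (i + m) + (Lf (i + m) - Lf i - Lf m))
       = (1 / nu - 1) * (Lf (i + m) - Lf i - Lf m)" using nu0 by (simp add: field_simps)
    moreover have "0 \<le> (1 / nu - 1) * (Lf (i + m) - Lf i - Lf m)"
      using C nu0 nu1 by (intro mult_nonneg_nonneg) auto
    ultimately show ?thesis by linarith
  qed
  hence "exp (- (1 / nu) * Lf (i + m) + (Lf (i + m) - Lf i - Lf m)) \<le> exp (- (1 / nu) * Lf i + - (1 / nu) * Lf m)"
    by simp
  thus ?thesis by (simp only: AA_exp binom_exp[OF le_add1] add_diff_cancel_left' exp_add)
qed

lemma AA_Suc_le: "AA nu (Suc n) \<le> AA nu n"
proof -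
  have "Lf n \<le> Lf (Suc n)" by (simp add: Lf_Suc)
  hence "- (1 / nu) * Lf (Suc n) \<le> - (1 / nu) * Lf n" using nu0 by (simp add: divide_right_mono)
  thus ?thesis by (simp only: AA_exp exp_le_cancel_iff)
qed

lemma g_ge1: "0 \<le> x \<Longrightarrow> 1 \<le> ftr nu x"
proof -
  assume x: "0 \<le> x"
  have "sum (TT nu x) {..<1} \<le> suminf (TT nu x)"
    by (rule sum_le_suminf[OF summable_TT[OF x]]) (auto intro: TT_nonneg[OF x])
  thus ?thesis by (simp add: ftr_eq TT_def AA_def)
qed

lemma g_mono: "0 \<le> x \<Longrightarrow> x \<le> y \<Longrightarrow> ftr nu x \<le> ftr nu y"
  unfolding ftr_eq
  by (intro suminf_le summable_TT) (auto simp: TT_def AA_pos less_imp_le intro!: mult_left_mono power_mono)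

lemma g0: "ftr nu 0 = 1"
  unfolding ftr_def using powser_zero[of "\<lambda>j. fact j powr (- 1 / nu)"] by simp

lemma EE0: "EE nu y 0 = 1"
  by (simp add: EE_def)

lemma sum_EE: "suminf (EE nu y) = exp (y powr nu)"
  using EE_sums sums_unique by metis

lemma summable_EE: "summable (EE nu y)"
  using EE_sums sums_summable by blast

lemma TT0: "TT nu x 0 = 1"
  by (simp add: TT_def AA_def)

lemma TT_expand: "TT nu (x + y) n - TT nu x n = (\<Sum>i<n. AA nu n * real (n choose i) * x ^ i * y ^ (n - i))"
proof -
  have "TT nu (x + y) n = AA nu n * (\<Sum>i\<le>n. real (n choose i) * x ^ i * y ^ (n - i))"
    by (simp add: TT_def binomial_ring)
  also have "\<dots> = AA nu n * (\<Sum>i<n. real (n choose i) * x ^ i * y ^ (n - i)) + AA nu n * x ^ n"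
    by (simp add: lessThan_Suc_atMost[symmetric] distrib_left)
  finally show ?thesis by (simp add: TT_def sum_distrib_left mult_ac)
qed

lemma diff_bound:
  assumes x: "0 \<le> x" and y: "0 \<le> y" and K: "0 \<le> K"
    and B: "\<And>N. (\<Sum>n<N. \<Sum>i<n. K * (AA nu n * real (n choose i) * x ^ i * y ^ (n - i))) \<le> B"
  shows "K * (ftr nu (x + y) - ftr nu x) \<le> B"
proof -
  have s1: "summable (TT nu (x + y))" and s2: "summable (TT nu x)"
    using x y by (auto intro: summable_TT)
  have "K * (ftr nu (x + y) - ftr nu x) = (\<Sum>n. K * (TT nu (x + y) n - TT nu x n))"
    unfolding ftr_eq using s1 s2 by (simp add: suminf_diff suminf_mult summable_diff)
  also have "\<dots> \<le> B"
  proof (rule suminf_le_const)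
    show "summable (\<lambda>n. K * (TT nu (x + y) n - TT nu x n))"
      using s1 s2 by (intro summable_mult summable_diff)
    fix N
    show "(\<Sum>n<N. K * (TT nu (x + y) n - TT nu x n)) \<le> B"
      using B[of N] by (simp add: TT_expand sum_distrib_left)
  qed
  finally show ?thesis .
qed

lemma C1_rad:
  assumes y: "0 < y" and yx: "y \<le> x"
  shows "rpow x (1 - nu) * (ftr nu (x + y) - ftr nu x) \<le> rpow y (1 - nu) * (ftr nu x * (exp (y powr nu) - 1))"
proof (rule diff_bound)
  show "0 \<le> x" "0 \<le> y" "0 \<le> rpow x (1 - nu)" using y yx by (auto simp: rpow_def)
  have x: "0 \<le> x" using y yx by simp
  fix N
  show "(\<Sum>n<N. \<Sum>i<n. rpow x (1 - nu) * (AA nu n * real (n choose i) * x ^ i * y ^ (n - i)))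
     \<le> rpow y (1 - nu) * (ftr nu x * (exp (y powr nu) - 1))"
  proof (rule core_pattern[where P = "\<lambda>n i. TT nu x n * EE nu y (n - i)" and Q = "\<lambda>n i. TT nu x i * EE nu y (n - i)" and nu = nu])
    show "0 \<le> nu" "nu \<le> 1" "0 \<le> rpow y (1 - nu)" using nu0 nu1 by (auto simp: rpow_def)
    show "\<And>n i. 0 \<le> TT nu x n * EE nu y (n - i)" "\<And>n i. 0 \<le> TT nu x i * EE nu y (n - i)"
      using x by (auto intro!: mult_nonneg_nonneg TT_nonneg EE_nonneg)
    fix n i :: nat assume "i < n"
    thus "rpow x (1 - nu) * (AA nu n * real (n choose i) * x ^ i * y ^ (n - i))
        \<le> rpow y (1 - nu) * ((1 - nu) * (TT nu x n * EE nu y (n - i)) + nu * (TT nu x i * EE nu y (n - i)))"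
      using C1_term[OF y yx, of "n - i" i] by simp
  next
    have "(\<Sum>n<N. \<Sum>i<n. TT nu x n * EE nu y (n - i)) = (\<Sum>n<N. TT nu x n * (\<Sum>i<n. EE nu y (n - i)))"
      by (simp add: sum_distrib_left)
    also have "\<dots> \<le> suminf (TT nu x) * (suminf (EE nu y) - EE nu y 0)"
      by (rule H2'[OF TT_nonneg[OF x] EE_nonneg summable_TT[OF x] summable_EE])
    finally show "(\<Sum>n<N. \<Sum>i<n. TT nu x n * EE nu y (n - i)) \<le> ftr nu x * (exp (y powr nu) - 1)"
      by (simp add: ftr_eq sum_EE EE0)
  next
    have "(\<Sum>n<N. \<Sum>i<n. TT nu x i * EE nu y (n - i)) \<le> suminf (TT nu x) * (suminf (EE nu y) - EE nu y 0)"
      by (rule H1'[OF TT_nonneg[OF x] EE_nonneg summable_TT[OF x] summable_EE])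
    thus "(\<Sum>n<N. \<Sum>i<n. TT nu x i * EE nu y (n - i)) \<le> ftr nu x * (exp (y powr nu) - 1)"
      by (simp add: ftr_eq sum_EE EE0)
  qed
qed

lemma C2_rad:
  assumes x: "0 < x" and xy: "x \<le> y" and q: "0 \<le> q"
  shows "exp (q * ln x) * (ftr nu (x + y) - ftr nu x) \<le> exp (q * ln y) * ((ftr nu y - 1) * exp (x powr nu))"
proof (rule diff_bound)
  show "0 \<le> x" "0 \<le> y" "0 \<le> exp (q * ln x)" using x xy by auto
  have y: "0 \<le> y" using x xy by simp
  fix N
  show "(\<Sum>n<N. \<Sum>i<n. exp (q * ln x) * (AA nu n * real (n choose i) * x ^ i * y ^ (n - i)))
     \<le> exp (q * ln y) * ((ftr nu y - 1) * exp (x powr nu))"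
  proof (rule core_pattern[where P = "\<lambda>n i. EE nu x i * TT nu y n" and Q = "\<lambda>n i. EE nu x i * TT nu y (n - i)" and nu = nu])
    show "0 \<le> nu" "nu \<le> 1" "0 \<le> exp (q * ln y)" using nu0 nu1 by auto
    show "\<And>n i. 0 \<le> EE nu x i * TT nu y n" "\<And>n i. 0 \<le> EE nu x i * TT nu y (n - i)"
      using y by (auto intro!: mult_nonneg_nonneg TT_nonneg EE_nonneg)
    fix n i :: nat assume "i < n"
    thus "exp (q * ln x) * (AA nu n * real (n choose i) * x ^ i * y ^ (n - i))
        \<le> exp (q * ln y) * ((1 - nu) * (EE nu x i * TT nu y n) + nu * (EE nu x i * TT nu y (n - i)))"
      using C2_term[OF x xy q, of i "n - i"] by simp
  next
    have "(\<Sum>n<N. \<Sum>i<n. EE nu x i * TT nu y n) = (\<Sum>n<N. TT nu y n * (\<Sum>i<n. EE nu x i))"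
      by (simp add: sum_distrib_left mult_ac)
    also have "\<dots> \<le> (suminf (TT nu y) - TT nu y 0) * suminf (EE nu x)"
      by (rule H2''[OF TT_nonneg[OF y] EE_nonneg summable_TT[OF y] summable_EE])
    finally show "(\<Sum>n<N. \<Sum>i<n. EE nu x i * TT nu y n) \<le> (ftr nu y - 1) * exp (x powr nu)"
      by (simp add: ftr_eq sum_EE TT0)
  next
    have "(\<Sum>n<N. \<Sum>i<n. EE nu x i * TT nu y (n - i)) \<le> suminf (EE nu x) * (suminf (TT nu y) - TT nu y 0)"
      by (rule H1'[OF EE_nonneg TT_nonneg[OF y] summable_EE summable_TT[OF y]])
    thus "(\<Sum>n<N. \<Sum>i<n. EE nu x i * TT nu y (n - i)) \<le> (ftr nu y - 1) * exp (x powr nu)"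
      by (simp add: ftr_eq sum_EE TT0 mult_ac)
  qed
qed

lemma C0_rad:
  assumes x: "0 < x" and y: "0 < y"
  shows "rpow x (1 - nu) * (ftr nu (x + y) - ftr nu x) \<le> rpow y (1 - nu) * (ftr nu x * ftr nu y)"
proof (rule diff_bound)
  show "0 \<le> x" "0 \<le> y" "0 \<le> rpow x (1 - nu)" using x y by (auto simp: rpow_def)
  have x': "0 \<le> x" and y': "0 \<le> y" using x y by auto
  fix N
  show "(\<Sum>n<N. \<Sum>i<n. rpow x (1 - nu) * (AA nu n * real (n choose i) * x ^ i * y ^ (n - i)))
     \<le> rpow y (1 - nu) * (ftr nu x * ftr nu y)"
  proof (rule core_pattern[where P = "\<lambda>n i. TT nu x (Suc i) * TT nu y (n - Suc i)" and Q = "\<lambda>n i. TT nu x i * TT nu y (n - i)" and nu = nu])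
    show "0 \<le> nu" "nu \<le> 1" "0 \<le> rpow y (1 - nu)" using nu0 nu1 by (auto simp: rpow_def)
    show "\<And>n i. 0 \<le> TT nu x (Suc i) * TT nu y (n - Suc i)" "\<And>n i. 0 \<le> TT nu x i * TT nu y (n - i)"
      using x' y' by (auto intro!: mult_nonneg_nonneg TT_nonneg)
    fix n i :: nat assume ni: "i < n"
    have e1: "i + Suc (n - Suc i) = n" and e2: "Suc (n - Suc i) = n - i" using ni by auto
    show "rpow x (1 - nu) * (AA nu n * real (n choose i) * x ^ i * y ^ (n - i))
        \<le> rpow y (1 - nu) * ((1 - nu) * (TT nu x (Suc i) * TT nu y (n - Suc i)) + nu * (TT nu x i * TT nu y (n - i)))"
      using C0_term[OF x y, of i "n - Suc i"] unfolding e2 using ni by simp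
  next
    have "(\<Sum>n<N. \<Sum>i<n. TT nu x (Suc i) * TT nu y (n - Suc i)) \<le> suminf (TT nu x) * suminf (TT nu y)"
      by (rule H3[OF TT_nonneg[OF x'] TT_nonneg[OF y'] summable_TT[OF x'] summable_TT[OF y']])
    thus "(\<Sum>n<N. \<Sum>i<n. TT nu x (Suc i) * TT nu y (n - Suc i)) \<le> ftr nu x * ftr nu y"
      by (simp add: ftr_eq)
  next
    have "(\<Sum>n<N. \<Sum>i<n. TT nu x i * TT nu y (n - i)) \<le> suminf (TT nu x) * (suminf (TT nu y) - TT nu y 0)"
      by (rule H1'[OF TT_nonneg[OF x'] TT_nonneg[OF y'] summable_TT[OF x'] summable_TT[OF y']])
    also have "\<dots> \<le> suminf (TT nu x) * suminf (TT nu y)"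
      using g_ge1[OF x'] by (simp add: TT0 ftr_eq)
    finally show "(\<Sum>n<N. \<Sum>i<n. TT nu x i * TT nu y (n - i)) \<le> ftr nu x * ftr nu y"
      by (simp add: ftr_eq)
  qed
qed

lemma rpow_nonneg: "0 \<le> rpow x (1 - nu)"
  by (simp add: rpow_def)

lemma rpow_mono: "0 \<le> x \<Longrightarrow> x \<le> y \<Longrightarrow> rpow x (1 - nu) \<le> rpow y (1 - nu)"
  using nu1 by (simp add: rpow_def powr_mono2)

lemma rpow_pos: "0 < x \<Longrightarrow> 0 < rpow x (1 - nu)"
  by (simp add: pp_exp)

lemma rpow_2: "0 \<le> c \<Longrightarrow> rpow (2 * c) (1 - nu) = 2 powr (1 - nu) * rpow c (1 - nu)"
  by (simp add: rpow_def powr_mult)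

lemma rpow_powr: "0 \<le> c \<Longrightarrow> rpow c (1 - nu) * c powr nu = c"
proof (cases "c = 0")
  case False
  assume "0 \<le> c" hence c: "0 < c" using False by simp
  have "rpow c (1 - nu) * c powr nu = exp ((1 - nu) * ln c + nu * ln c)"
    using c by (simp add: pp_exp[OF c] powr_def exp_add)
  also have "(1 - nu) * ln c + nu * ln c = ln c" by (simp add: algebra_simps)
  hence "exp ((1 - nu) * ln c + nu * ln c) = c" using c by simp
  finally show ?thesis .
qed (use nu0 in simp)

lemma L2_rad:
  assumes x: "0 \<le> x" and xy: "x \<le> y"
  shows "rpow y (1 - nu) * (ftr nu y - ftr nu x) \<le> (y - x) * ftr nu y"
proof (cases "y = 0")
  case True thus ?thesis using x xy by simp
next
  case False
  hence y: "0 < y" using x xy by simp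
  have y': "0 \<le> y" using y by simp
  have s1: "summable (TT nu y)" and s2: "summable (TT nu x)" using x y' by (auto intro: summable_TT)
  define f where "f n = rpow y (1 - nu) * (TT nu y n - TT nu x n)" for n
  have f0: "0 \<le> f n" for n
    unfolding f_def TT_def using x xy
    by (intro mult_nonneg_nonneg rpow_nonneg) (auto simp: AA_pos less_imp_le power_mono intro!: mult_left_mono)
  have "rpow y (1 - nu) * (ftr nu y - ftr nu x) = suminf f"
    unfolding ftr_eq f_def using s1 s2 by (simp add: suminf_diff suminf_mult summable_diff)
  also have "\<dots> \<le> (y - x) * ftr nu y"
  proof (rule suminf_le_const)
    show "summable f" unfolding f_def using s1 s2 by (intro summable_mult summable_diff)
    fix N
    have sS: "summable (\<lambda>j. TT nu y (Suc j))" using s1 by (simp add: summable_Suc_iff)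
    have "sum f {..<N} \<le> sum f {..<Suc N}" using f0 by simp
    also have "\<dots> = f 0 + (\<Sum>j<N. f (Suc j))" by (rule sum.lessThan_Suc_shift)
    also have "\<dots> \<le> 0 + (\<Sum>j<N. (y - x) * ((1 - nu) * TT nu y (Suc j) + nu * TT nu y j))"
    proof (intro add_mono sum_mono)
      show "f 0 \<le> 0" by (simp add: f_def TT0)
      fix j
      show "f (Suc j) \<le> (y - x) * ((1 - nu) * TT nu y (Suc j) + nu * TT nu y j)"
        using L2_term[OF y x xy, of j] by (simp add: f_def TT_def right_diff_distrib)
    qed
    also have "\<dots> = (y - x) * ((1 - nu) * (\<Sum>j<N. TT nu y (Suc j)) + nu * (\<Sum>j<N. TT nu y j))"
      by (simp add: sum_distrib_left sum.distrib distrib_left mult.assoc)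
    also have "\<dots> \<le> (y - x) * ((1 - nu) * ftr nu y + nu * ftr nu y)"
    proof -
      have "(\<Sum>j<N. TT nu y (Suc j)) \<le> (\<Sum>j. TT nu y (Suc j))"
        by (rule sum_le_suminf[OF sS]) (auto intro: TT_nonneg[OF y'])
      also have "\<dots> \<le> ftr nu y" using suminf_split_head[OF s1] by (simp add: ftr_eq TT0)
      finally have b1: "(\<Sum>j<N. TT nu y (Suc j)) \<le> ftr nu y" .
      have b2: "(\<Sum>j<N. TT nu y j) \<le> ftr nu y"
        unfolding ftr_eq by (rule sum_le_suminf[OF s1]) (auto intro: TT_nonneg[OF y'])
      show ?thesis using b1 b2 nu0 nu1 xy by (intro mult_left_mono add_mono) auto
    qed
    finally show "sum f {..<N} \<le> (y - x) * ftr nu y" by (simp add: algebra_simps)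
  qed
  finally show ?thesis .
qed

lemma A9_rad:
  assumes x: "0 \<le> x" and y: "0 \<le> y"
  shows "ftr nu (x + y) \<le> ftr nu x * ftr nu y"
proof -
  have "ftr nu (x + y) = suminf (TT nu (x + y))" by (rule ftr_eq)
  also have "\<dots> \<le> suminf (TT nu x) * suminf (TT nu y)"
  proof (rule suminf_le_const)
    show "summable (TT nu (x + y))" using x y by (intro summable_TT) simp
    fix N
    have "(\<Sum>n<N. TT nu (x + y) n) = (\<Sum>n<N. \<Sum>i\<le>n. AA nu n * real (n choose i) * x ^ i * y ^ (n - i))"
      by (simp add: TT_def binomial_ring sum_distrib_left mult_ac)
    also have "\<dots> \<le> (\<Sum>n<N. \<Sum>i\<le>n. TT nu x i * TT nu y (n - i))"
    proof (intro sum_mono)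
      fix n i :: nat assume "i \<in> {..n}"
      hence "i \<le> n" by simp
      have "AA nu n * real (n choose i) \<le> AA nu i * AA nu (n - i)"
        using A9_term[of i "n - i"] \<open>i \<le> n\<close> by simp
      hence "AA nu n * real (n choose i) * (x ^ i * y ^ (n - i)) \<le> AA nu i * AA nu (n - i) * (x ^ i * y ^ (n - i))"
        using x y by (intro mult_right_mono) auto
      thus "AA nu n * real (n choose i) * x ^ i * y ^ (n - i) \<le> TT nu x i * TT nu y (n - i)"
        by (simp add: TT_def mult_ac)
    qed
    also have "\<dots> \<le> suminf (TT nu x) * suminf (TT nu y)"
      by (rule H1[OF TT_nonneg[OF x] TT_nonneg[OF y] summable_TT[OF x] summable_TT[OF y]])
    finally show "(\<Sum>n<N. TT nu (x + y) n) \<le> suminf (TT nu x) * suminf (TT nu y)" .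
  qed
  finally show ?thesis by (simp add: ftr_eq)
qed

lemma g_lin: "0 \<le> c \<Longrightarrow> 1 + c \<le> ftr nu c"
proof -
  assume c: "0 \<le> c"
  have "sum (TT nu c) {..<2} \<le> suminf (TT nu c)"
    by (rule sum_le_suminf[OF summable_TT[OF c]]) (auto intro: TT_nonneg[OF c])
  thus ?thesis by (simp add: ftr_eq TT_def AA_def numeral_2_eq_2)
qed

lemma powr_le_g: "0 \<le> c \<Longrightarrow> c powr nu \<le> ftr nu c"
proof -
  assume c: "0 \<le> c"
  have "c powr nu \<le> 1 + c"
  proof (cases "c \<le> 1")
    case True
    hence "c powr nu \<le> 1" using c nu0 by (intro powr_le1) auto
    thus ?thesis using c by simp
  next
    case False
    hence "c powr nu \<le> c powr 1" using nu1 by (intro powr_mono) auto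
    thus ?thesis using False by simp
  qed
  thus ?thesis using g_lin[OF c] by simp
qed

lemma M1: "0 \<le> c \<Longrightarrow> c \<le> rpow c (1 - nu) * ftr nu c"
proof -
  assume c: "0 \<le> c"
  have "c = rpow c (1 - nu) * c powr nu" using rpow_powr[OF c] by simp
  also have "\<dots> \<le> rpow c (1 - nu) * ftr nu c"
    by (intro mult_left_mono powr_le_g c rpow_nonneg)
  finally show ?thesis .
qed

lemma M2: "0 \<le> c \<Longrightarrow> c \<le> rpow c (1 - nu) * (exp (c powr nu) - 1)"
proof -
  assume c: "0 \<le> c"
  have "c = rpow c (1 - nu) * c powr nu" using rpow_powr[OF c] by simp
  also have "\<dots> \<le> rpow c (1 - nu) * (exp (c powr nu) - 1)"
  proof (intro mult_left_mono rpow_nonneg)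
    show "c powr nu \<le> exp (c powr nu) - 1" using exp_ge_add_one_self[of "c powr nu"] by linarith
  qed
  finally show ?thesis .
qed

lemma M3: "0 \<le> b \<Longrightarrow> ftr nu b - 1 \<le> (exp (b powr nu) - 1) * ftr nu b"
proof -
  assume b: "0 \<le> b"
  have s: "summable (TT nu b)" by (rule summable_TT[OF b])
  have g1: "1 \<le> ftr nu b" by (rule g_ge1[OF b])
  have "ftr nu b - 1 = (\<Sum>n. TT nu b (Suc n))"
    using suminf_split_head[OF s] by (simp add: ftr_eq TT0)
  also have "\<dots> \<le> (\<Sum>n. b * TT nu b n)"
  proof (rule suminf_le)
    fix n
    have "AA nu (Suc n) * b ^ Suc n \<le> AA nu n * b ^ Suc n"
      using b by (intro mult_right_mono AA_Suc_le) auto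
    thus "TT nu b (Suc n) \<le> b * TT nu b n" by (simp add: TT_def mult_ac)
  qed (use s in \<open>auto simp: summable_Suc_iff intro: summable_mult\<close>)
  also have "\<dots> = b * ftr nu b" using s by (simp add: suminf_mult ftr_eq)
  finally have h1: "ftr nu b - 1 \<le> b * ftr nu b" .
  have h2: "min b 1 \<le> b powr nu"
  proof (cases "b \<le> 1")
    case True
    have "b powr 1 \<le> b powr nu" using True b nu1 by (intro powr_mono') auto
    thus ?thesis using True b by (cases "b = 0") auto
  next
    case False
    have "1 \<le> b powr nu" using False nu0 by (intro ge_one_powr_ge_zero) auto
    thus ?thesis by simp
  qed
  have "ftr nu b - 1 \<le> min b 1 * ftr nu b"
    using h1 g1 by (cases "b \<le> 1") (auto simp: min_def)
  also have "\<dots> \<le> b powr nu * ftr nu b" using h2 g1 by (intro mult_right_mono) auto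
  also have "\<dots> \<le> (exp (b powr nu) - 1) * ftr nu b"
  proof (intro mult_right_mono)
    show "b powr nu \<le> exp (b powr nu) - 1" using exp_ge_add_one_self[of "b powr nu"] by linarith
  qed (use g1 in auto)
  finally show ?thesis .
qed

lemma C1_gen:
  assumes y: "0 \<le> y" and yx: "y \<le> x"
  shows "rpow x (1 - nu) * (ftr nu (x + y) - ftr nu x) \<le> rpow y (1 - nu) * (ftr nu x * (exp (y powr nu) - 1))"
proof (cases "y = 0")
  case True thus ?thesis using nu0 by simp
next
  case False thus ?thesis using C1_rad[OF _ yx] y by simp
qed

lemma C2_gen:
  assumes x: "0 \<le> x" and xy: "x \<le> y"
  shows "rpow x (1 - nu) * (ftr nu (x + y) - ftr nu x) \<le> rpow y (1 - nu) * ((ftr nu y - 1) * exp (x powr nu))"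
proof (cases "x = 0")
  case True
  have "rpow 0 (1 - nu) * (ftr nu y - 1) \<le> rpow y (1 - nu) * (ftr nu y - 1)"
    using g_ge1[of y] xy True by (intro mult_right_mono rpow_mono) auto
  thus ?thesis using True nu0 by (simp add: g0)
next
  case False
  hence x': "0 < x" using x by simp
  have y': "0 < y" using x' xy by simp
  show ?thesis using C2_rad[OF x' xy, of "1 - nu"] nu1 unfolding pp_exp[OF x'] pp_exp[OF y'] by simp
qed

lemma C2'_gen:
  assumes x: "0 \<le> x" and xy: "x \<le> y"
  shows "ftr nu (x + y) - ftr nu x \<le> (ftr nu y - 1) * exp (x powr nu)"
proof (cases "x = 0")
  case True thus ?thesis using nu0 by (simp add: g0)
next
  case False
  hence x': "0 < x" using x by simp
  show ?thesis using C2_rad[OF x' xy, of 0] by simp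
qed

lemma C0_gen:
  assumes x: "0 \<le> x" and y: "0 \<le> y"
  shows "rpow x (1 - nu) * (ftr nu (x + y) - ftr nu x) \<le> rpow y (1 - nu) * (ftr nu x * ftr nu y)"
proof (cases "x = 0 \<or> y = 0")
  case True
  show ?thesis
  proof (cases "y = 0")
    case True thus ?thesis using x g_ge1[OF x] by (simp add: rpow_nonneg g0)
  next
    case False
    hence x0: "x = 0" using \<open>x = 0 \<or> y = 0\<close> by simp
    have "rpow 0 (1 - nu) * (ftr nu y - 1) \<le> rpow y (1 - nu) * (ftr nu y)"
      using g_ge1[OF y] y by (intro mult_mono rpow_mono rpow_nonneg) auto
    thus ?thesis using x0 by (simp add: g0)
  qed
next
  case False thus ?thesis using C0_rad x y by simp
qed

lemma A10_rad:
  assumes y: "0 \<le> y" and yx: "y \<le> x"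
  shows "ftr nu (x + y) \<le> ftr nu x * exp (y powr nu)"
proof (cases "y = 0")
  case True thus ?thesis using nu0 by simp
next
  case False
  hence x: "0 < x" using y yx by simp
  have "rpow x (1 - nu) * (ftr nu (x + y) - ftr nu x) \<le> rpow y (1 - nu) * (ftr nu x * (exp (y powr nu) - 1))"
    by (rule C1_gen[OF y yx])
  also have "\<dots> \<le> rpow x (1 - nu) * (ftr nu x * (exp (y powr nu) - 1))"
    using g_ge1[of x] x y yx by (intro mult_right_mono rpow_mono mult_nonneg_nonneg) auto
  finally have "ftr nu (x + y) - ftr nu x \<le> ftr nu x * (exp (y powr nu) - 1)"
    using rpow_pos[OF x] by simp
  thus ?thesis by (simp add: algebra_simps)
qed

lemma g_pos: "0 \<le> x \<Longrightarrow> 0 < ftr nu x"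
  using g_ge1[of x] by simp

lemma gmax_pos: "0 \<le> th \<Longrightarrow> 0 < ftr nu (max b th)"
  by (intro g_pos) simp

lemma E_mono: "0 \<le> b \<Longrightarrow> b \<le> c \<Longrightarrow> exp (b powr nu) \<le> exp (c powr nu)"
  using nu0 by (simp add: powr_mono2)

lemma E_ge1: "1 \<le> exp (b powr nu)"
  by simp

lemma KL:
  assumes b: "0 \<le> b" and c: "0 \<le> c" and th: "0 \<le> th" and ba: "b \<le> a" and t1: "a \<le> b + c"
  shows "ftr nu (max b th) \<le> ftr nu (max a th)"
    and "ftr nu (max a th) - ftr nu (max b th) \<le> ftr nu (b + c) - ftr nu b"
proof -
  show "ftr nu (max b th) \<le> ftr nu (max a th)" using b ba by (intro g_mono) auto
  show "ftr nu (max a th) - ftr nu (max b th) \<le> ftr nu (b + c) - ftr nu b"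
  proof (cases "a \<le> th")
    case True
    hence "max a th = max b th" using ba by simp
    thus ?thesis using g_mono[of b "b + c"] b c by simp
  next
    case False
    hence "max a th = a" by simp
    moreover have "ftr nu a \<le> ftr nu (b + c)" using t1 b ba by (intro g_mono) auto
    moreover have "ftr nu b \<le> ftr nu (max b th)" using b by (intro g_mono) auto
    ultimately show ?thesis by simp
  qed
qed

lemma R11:
  assumes a: "0 \<le> a" and th: "0 \<le> th" and ab: "a \<le> b" and t2: "b \<le> a + c"
  shows "(ftr nu (max b th) - ftr nu (max a th)) * rpow b (1 - nu) \<le> c * ftr nu (max b th)"
proof -
  have m: "max a th \<le> max b th" and d: "max b th - max a th \<le> c" using ab t2 by auto
  have gm: "ftr nu (max a th) \<le> ftr nu (max b th)" using m a by (intro g_mono) auto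
  have "(ftr nu (max b th) - ftr nu (max a th)) * rpow b (1 - nu)
      \<le> rpow (max b th) (1 - nu) * (ftr nu (max b th) - ftr nu (max a th))"
    using gm a ab by (subst mult.commute) (intro mult_right_mono rpow_mono, auto)
  also have "\<dots> \<le> (max b th - max a th) * ftr nu (max b th)"
    using a m by (intro L2_rad) auto
  also have "\<dots> \<le> c * ftr nu (max b th)"
    using d less_imp_le[OF gmax_pos[OF th, of b]] by (intro mult_right_mono) auto
  finally show ?thesis .
qed

lemma R9:
  assumes a: "0 \<le> a" and b: "0 \<le> b" and c: "0 \<le> c" and th: "0 \<le> th" and t1: "a \<le> b + c"
  shows "ftr nu (max a th) \<le> ftr nu (max c th) * ftr nu (max b th)"
proof -
  have "ftr nu (max a th) \<le> ftr nu (max c th + max b th)"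
    using a b c th t1 by (intro g_mono) auto
  also have "\<dots> \<le> ftr nu (max c th) * ftr nu (max b th)"
    using c th by (intro A9_rad) auto
  finally show ?thesis .
qed

lemma R10:
  assumes a: "0 \<le> a" and b: "0 \<le> b" and c: "0 \<le> c" and th: "0 \<le> th" and t1: "a \<le> b + c"
    and h: "min a b \<le> c"
  shows "ftr nu (max a th) \<le> ftr nu (max c th) * exp (b powr nu)"
proof -
  have Gc: "1 \<le> ftr nu (max c th)" using c by (intro g_ge1) auto
  have "ftr nu (max c th) \<le> ftr nu (max c th) * exp (b powr nu)"
    using Gc E_ge1[of b] by (simp add: mult_le_cancel_left1)
  moreover have "ftr nu (max a th) \<le> ftr nu (max c th) * exp (b powr nu)"
    if "a \<le> c"
  proof -
    have "ftr nu (max a th) \<le> ftr nu (max c th)" using that a by (intro g_mono) auto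
    thus ?thesis using \<open>ftr nu (max c th) \<le> _\<close> by linarith
  qed
  moreover have "ftr nu (max a th) \<le> ftr nu (max c th) * exp (b powr nu)"
    if bc: "b \<le> c"
  proof (cases "a \<le> th")
    case True
    hence "ftr nu (max a th) \<le> ftr nu (max c th)" using th by (intro g_mono) auto
    thus ?thesis using \<open>ftr nu (max c th) \<le> _\<close> by simp
  next
    case False
    hence "ftr nu (max a th) \<le> ftr nu (max c th + b)" using t1 a by (intro g_mono) auto
    also have "\<dots> \<le> ftr nu (max c th) * exp (b powr nu)" using b bc by (intro A10_rad) auto
    finally show ?thesis .
  qed
  ultimately show ?thesis using h by linarith
qed

lemma R12:
  assumes a: "0 \<le> a" and b: "0 \<le> b" and c: "0 \<le> c" and th: "0 \<le> th" and t1: "a \<le> b + c" and t2: "b \<le> a + c"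
  shows "\<bar>ftr nu (max a th) - ftr nu (max b th)\<bar> * rpow b (1 - nu)
     \<le> rpow c (1 - nu) * ftr nu (max c th) * ftr nu (max b th)"
proof (cases "b \<le> a")
  case True
  note k = KL[OF b c th True t1]
  have "\<bar>ftr nu (max a th) - ftr nu (max b th)\<bar> * rpow b (1 - nu) \<le> rpow b (1 - nu) * (ftr nu (b + c) - ftr nu b)"
    using k rpow_nonneg[of b] by (simp add: mult.commute mult_left_mono)
  also have "\<dots> \<le> rpow c (1 - nu) * (ftr nu b * ftr nu c)" by (rule C0_gen[OF b c])
  also have "\<dots> \<le> rpow c (1 - nu) * (ftr nu (max b th) * ftr nu (max c th))"
    using b c g_pos[of b] g_pos[of c] g_mono[of b "max b th"] g_mono[of c "max c th"]
    by (intro mult_left_mono mult_mono rpow_nonneg) auto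
  finally show ?thesis by (simp add: mult_ac)
next
  case False
  hence ab: "a \<le> b" by simp
  have "ftr nu (max a th) \<le> ftr nu (max b th)" using a ab by (intro g_mono) auto
  hence "\<bar>ftr nu (max a th) - ftr nu (max b th)\<bar> * rpow b (1 - nu)
      = (ftr nu (max b th) - ftr nu (max a th)) * rpow b (1 - nu)" by simp
  also have "\<dots> \<le> c * ftr nu (max b th)" by (rule R11[OF a th ab t2])
  also have "\<dots> \<le> rpow c (1 - nu) * ftr nu c * ftr nu (max b th)"
    using M1[OF c] less_imp_le[OF gmax_pos[OF th, of b]] by (intro mult_right_mono) auto
  also have "\<dots> \<le> rpow c (1 - nu) * ftr nu (max c th) * ftr nu (max b th)"
    using c less_imp_le[OF gmax_pos[OF th, of b]] g_mono[of c "max c th"]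
    by (intro mult_right_mono mult_left_mono rpow_nonneg) auto
  finally show ?thesis .
qed

lemma R13:
  assumes a: "0 \<le> a" and b: "0 \<le> b" and c: "0 \<le> c" and th: "0 \<le> th" and t1: "a \<le> b + c" and t2: "b \<le> a + c"
    and h: "min a c \<le> b"
  shows "\<bar>ftr nu (max a th) - ftr nu (max b th)\<bar> * rpow b (1 - nu)
     \<le> rpow c (1 - nu) * (exp (c powr nu) - 1) * ftr nu (max b th)"
proof -
  have R0: "0 \<le> rpow c (1 - nu) * (exp (c powr nu) - 1) * ftr nu (max b th)"
    using less_imp_le[OF gmax_pos[OF th, of b]] by (intro mult_nonneg_nonneg rpow_nonneg) auto
  show ?thesis
  proof (cases "b \<le> a")
    case True
    show ?thesis
    proof (cases "a = b")
      case True thus ?thesis using R0 by simp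
    next
      case False
      hence cb: "c \<le> b" using h True by auto
      note k = KL[OF b c th True t1]
      have "\<bar>ftr nu (max a th) - ftr nu (max b th)\<bar> * rpow b (1 - nu) \<le> rpow b (1 - nu) * (ftr nu (b + c) - ftr nu b)"
        using k rpow_nonneg[of b] by (simp add: mult.commute mult_left_mono)
      also have "\<dots> \<le> rpow c (1 - nu) * (ftr nu b * (exp (c powr nu) - 1))" by (rule C1_gen[OF c cb])
      also have "\<dots> \<le> rpow c (1 - nu) * ((exp (c powr nu) - 1) * ftr nu (max b th))"
      proof (intro mult_left_mono rpow_nonneg)
        have "ftr nu b \<le> ftr nu (max b th)" using b by (intro g_mono) auto
        moreover have "0 \<le> exp (c powr nu) - 1" by simp
        ultimately have "ftr nu b * (exp (c powr nu) - 1) \<le> ftr nu (max b th) * (exp (c powr nu) - 1)"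
          by (rule mult_right_mono)
        thus "ftr nu b * (exp (c powr nu) - 1) \<le> (exp (c powr nu) - 1) * ftr nu (max b th)"
          by (simp only: mult.commute)
      qed
      finally show ?thesis by (simp add: mult_ac)
    qed
  next
    case False
    hence ab: "a \<le> b" by simp
    have gm: "ftr nu (max a th) \<le> ftr nu (max b th)" using a ab by (intro g_mono) auto
    show ?thesis
    proof (cases "b \<le> th")
      case True
      hence "max a th = max b th" using ab by simp
      thus ?thesis using R0 by simp
    next
      case bth: False
      hence mb: "max b th = b" by simp
      show ?thesis
      proof (cases "b \<le> c")
        case True
        have "ftr nu (max b th) - ftr nu (max a th) \<le> ftr nu b - 1"
          using mb g_ge1[of "max a th"] a by auto
        also have "\<dots> \<le> (exp (b powr nu) - 1) * ftr nu b" by (rule M3[OF b])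
        also have "\<dots> \<le> (exp (c powr nu) - 1) * ftr nu b"
          using E_mono[OF b True] g_pos[OF b] by (intro mult_right_mono) auto
        finally have d: "ftr nu (max b th) - ftr nu (max a th) \<le> (exp (c powr nu) - 1) * ftr nu b" .
        have "\<bar>ftr nu (max a th) - ftr nu (max b th)\<bar> * rpow b (1 - nu)
            = rpow b (1 - nu) * (ftr nu (max b th) - ftr nu (max a th))" using gm by simp
        also have "\<dots> \<le> rpow c (1 - nu) * ((exp (c powr nu) - 1) * ftr nu b)"
          using d gm b True by (intro mult_mono rpow_mono rpow_nonneg) auto
        finally show ?thesis using mb by (simp add: mult_ac)
      next
        case False
        have "\<bar>ftr nu (max a th) - ftr nu (max b th)\<bar> * rpow b (1 - nu)
            = (ftr nu (max b th) - ftr nu (max a th)) * rpow b (1 - nu)" using gm by simp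
        also have "\<dots> \<le> c * ftr nu (max b th)" by (rule R11[OF a th ab t2])
        also have "\<dots> \<le> rpow c (1 - nu) * (exp (c powr nu) - 1) * ftr nu (max b th)"
          using M2[OF c] less_imp_le[OF gmax_pos[OF th, of b]] by (intro mult_right_mono) auto
        finally show ?thesis .
      qed
    qed
  qed
qed

lemma R14:
  assumes a: "0 \<le> a" and b: "0 \<le> b" and c: "0 \<le> c" and th: "0 \<le> th" and t1: "a \<le> b + c" and t2: "b \<le> a + c"
    and h: "min a b \<le> c"
  shows "\<bar>ftr nu (max a th) - ftr nu (max b th)\<bar> * rpow b (1 - nu)
     \<le> (if a \<le> c \<and> c \<le> b then 2 powr (1 - nu) else 1)
        * rpow c (1 - nu) * (ftr nu (max c th) - 1) * exp (b powr nu)"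
proof -
  define C where "C = (if a \<le> c \<and> c \<le> b then 2 powr (1 - nu) else (1::real))"
  have C1: "1 \<le> C" using nu1 by (simp add: C_def ge_one_powr_ge_zero)
  have Gc: "1 \<le> ftr nu (max c th)" using c th by (intro g_ge1) auto
  have gc: "ftr nu c \<le> ftr nu (max c th)" using c by (intro g_mono) auto
  have R0: "0 \<le> rpow c (1 - nu) * (ftr nu (max c th) - 1) * exp (b powr nu)"
    using Gc by (intro mult_nonneg_nonneg rpow_nonneg) auto
  have Cup: "X \<le> C * (rpow c (1 - nu) * (ftr nu (max c th) - 1) * exp (b powr nu))"
    if "X \<le> rpow c (1 - nu) * (ftr nu (max c th) - 1) * exp (b powr nu)" for X
  proof -
    have "rpow c (1 - nu) * (ftr nu (max c th) - 1) * exp (b powr nu)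
        \<le> C * (rpow c (1 - nu) * (ftr nu (max c th) - 1) * exp (b powr nu))"
      using C1 R0 by (simp add: mult_le_cancel_right1)
    thus ?thesis using that by linarith
  qed
  have goal: "\<bar>ftr nu (max a th) - ftr nu (max b th)\<bar> * rpow b (1 - nu)
     \<le> C * (rpow c (1 - nu) * (ftr nu (max c th) - 1) * exp (b powr nu))"
  proof (cases "b \<le> a")
    case True
    hence bc: "b \<le> c" using h by auto
    note k = KL[OF b c th True t1]
    have "\<bar>ftr nu (max a th) - ftr nu (max b th)\<bar> * rpow b (1 - nu) \<le> rpow b (1 - nu) * (ftr nu (b + c) - ftr nu b)"
      using k rpow_nonneg[of b] by (simp add: mult.commute mult_left_mono)
    also have "\<dots> \<le> rpow c (1 - nu) * ((ftr nu c - 1) * exp (b powr nu))" by (rule C2_gen[OF b bc])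
    also have "\<dots> \<le> rpow c (1 - nu) * ((ftr nu (max c th) - 1) * exp (b powr nu))"
      using gc by (intro mult_left_mono mult_right_mono rpow_nonneg) auto
    finally show ?thesis by (intro Cup) (simp add: mult_ac)
  next
    case False
    hence ab: "a \<le> b" by simp
    have gm: "ftr nu (max a th) \<le> ftr nu (max b th)" using a ab by (intro g_mono) auto
    show ?thesis
    proof (cases "b \<le> th")
      case True
      hence "max a th = max b th" using ab by simp
      thus ?thesis using R0 C1 by simp
    next
      case bth: False
      hence mb: "max b th = b" by simp
      show ?thesis
      proof (cases "b \<le> c")
        case True
        have "ftr nu (max b th) - ftr nu (max a th) \<le> ftr nu b - 1"
          using mb g_ge1[of "max a th"] a by auto
        also have "\<dots> \<le> ftr nu (max c th) - 1" using g_mono[of b c] True b gc by auto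
        also have "\<dots> \<le> (ftr nu (max c th) - 1) * exp (b powr nu)"
          using Gc E_ge1[of b] by (simp add: mult_le_cancel_left1)
        finally have d: "ftr nu (max b th) - ftr nu (max a th) \<le> (ftr nu (max c th) - 1) * exp (b powr nu)" .
        have "\<bar>ftr nu (max a th) - ftr nu (max b th)\<bar> * rpow b (1 - nu)
            = rpow b (1 - nu) * (ftr nu (max b th) - ftr nu (max a th))" using gm by simp
        also have "\<dots> \<le> rpow c (1 - nu) * ((ftr nu (max c th) - 1) * exp (b powr nu))"
          using d gm b True by (intro mult_mono rpow_mono rpow_nonneg) auto
        finally show ?thesis by (intro Cup) (simp add: mult_ac)
      next
        case False
        hence cb: "c \<le> b" by simp
        have ac: "a \<le> c" using h ab by auto
        hence CC: "C = 2 powr (1 - nu)" using cb by (simp add: C_def)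
        have "rpow b (1 - nu) \<le> rpow (2 * c) (1 - nu)" using b t2 ac by (intro rpow_mono) auto
        also have "\<dots> = C * rpow c (1 - nu)" using rpow_2[OF c] CC by simp
        finally have pb: "rpow b (1 - nu) \<le> C * rpow c (1 - nu)" .
        have "ftr nu (max b th) - ftr nu (max a th) \<le> ftr nu b - ftr nu a"
          using mb g_mono[of a "max a th"] a by auto
        also have "\<dots> \<le> ftr nu (a + c) - ftr nu a" using g_mono[of b "a + c"] t2 b by auto
        also have "\<dots> \<le> (ftr nu c - 1) * exp (a powr nu)" by (rule C2'_gen[OF a ac])
        also have "\<dots> \<le> (ftr nu (max c th) - 1) * exp (b powr nu)"
          using gc E_mono[OF a ab] g_ge1[OF c] by (intro mult_mono) auto
        finally have d: "ftr nu (max b th) - ftr nu (max a th) \<le> (ftr nu (max c th) - 1) * exp (b powr nu)" .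
        have "\<bar>ftr nu (max a th) - ftr nu (max b th)\<bar> * rpow b (1 - nu)
            = (ftr nu (max b th) - ftr nu (max a th)) * rpow b (1 - nu)" using gm by simp
        also have "\<dots> \<le> ((ftr nu (max c th) - 1) * exp (b powr nu)) * (C * rpow c (1 - nu))"
          using d pb gm Gc by (intro mult_mono rpow_nonneg mult_nonneg_nonneg) auto
        finally show ?thesis by (simp add: mult_ac)
      qed
    qed
  qed
  thus ?thesis by (simp add: C_def mult_ac)
qed

lemma main_est:
  assumes th: "0 \<le> th"
  shows "A_estimates nu (\<lambda>xi :: real ^ 'n. ftr nu (max (norm xi) th))"
  unfolding A_estimates_def
proof (intro conjI allI impI)
  fix xi eta :: "real ^ 'n"
  have a: "0 \<le> norm xi" and b: "0 \<le> norm eta" and c: "0 \<le> norm (xi - eta)" by simp_all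
  have t1: "norm xi \<le> norm eta + norm (xi - eta)" using norm_triangle_sub[of xi eta] by simp
  have t2: "norm eta \<le> norm xi + norm (xi - eta)"
    using norm_triangle_sub[of eta xi] by (simp add: norm_minus_commute)
  show "ftr nu (max (norm xi) th) \<le> ftr nu (max (norm (xi - eta)) th) * ftr nu (max (norm eta) th)"
    by (rule R9[OF a b c th t1])
  show "\<bar>ftr nu (max (norm xi) th) - ftr nu (max (norm eta) th)\<bar> * rpow (norm eta) (1 - nu)
        \<le> rpow (norm (xi - eta)) (1 - nu) * ftr nu (max (norm (xi - eta)) th) * ftr nu (max (norm eta) th)"
    by (rule R12[OF a b c th t1 t2])
  {
    assume h: "min (norm xi) (norm eta) \<le> norm (xi - eta)"
    show "ftr nu (max (norm xi) th) \<le> ftr nu (max (norm (xi - eta)) th) * exp (norm eta powr nu)"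
      by (rule R10[OF a b c th t1 h])
    show "\<bar>ftr nu (max (norm xi) th) - ftr nu (max (norm eta) th)\<bar> * rpow (norm eta) (1 - nu)
        \<le> (if norm xi \<le> norm (xi - eta) \<and> norm (xi - eta) \<le> norm eta then 2 powr (1 - nu) else 1)
           * rpow (norm (xi - eta)) (1 - nu) * (ftr nu (max (norm (xi - eta)) th) - 1) * exp (norm eta powr nu)"
      by (rule R14[OF a b c th t1 t2 h])
  }
  {
    assume h: "norm xi \<le> norm eta"
    show "(ftr nu (max (norm eta) th) - ftr nu (max (norm xi) th)) * rpow (norm eta) (1 - nu)
        \<le> norm (xi - eta) * ftr nu (max (norm eta) th)"
      by (rule R11[OF a th h t2])
  }
  {
    assume h: "min (norm xi) (norm (xi - eta)) \<le> norm eta"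
    show "\<bar>ftr nu (max (norm xi) th) - ftr nu (max (norm eta) th)\<bar> * rpow (norm eta) (1 - nu)
        \<le> rpow (norm (xi - eta)) (1 - nu) * (exp (norm (xi - eta) powr nu) - 1) * ftr nu (max (norm eta) th)"
      by (rule R13[OF a b c th t1 t2 h])
  }
qed

end

theorem lemmaA2:
  fixes nu :: real
  assumes "0 < nu" and "nu \<le> 1"
  shows "A_estimates nu (ftilde nu :: real ^ 'n \<Rightarrow> real) \<and>
         A_estimates nu (\<lambda>xi :: real ^ 'n. max (ftilde nu xi) (ftr nu 1))"
proof
  have e1: "(ftilde nu :: real ^ 'n \<Rightarrow> real) = (\<lambda>xi. ftr nu (max (norm xi) 0))"
    by (simp add: fun_eq_iff ftilde_def)
  show "A_estimates nu (ftilde nu :: real ^ 'n \<Rightarrow> real)"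
    unfolding e1 by (rule main_est[OF assms]) simp
  have e2: "(\<lambda>xi :: real ^ 'n. max (ftilde nu xi) (ftr nu 1)) = (\<lambda>xi. ftr nu (max (norm xi) 1))"
  proof
    fix xi :: "real ^ 'n"
    show "max (ftilde nu xi) (ftr nu 1) = ftr nu (max (norm xi) 1)"
    proof (cases "norm xi \<le> 1")
      case True
      hence "ftr nu (norm xi) \<le> ftr nu 1" using g_mono[OF assms, of "norm xi" 1] by simp
      thus ?thesis using True by (simp add: ftilde_def max_def)
    next
      case False
      hence "ftr nu 1 \<le> ftr nu (norm xi)" using g_mono[OF assms, of 1 "norm xi"] by simp
      thus ?thesis using False by (simp add: ftilde_def max_def)
    qed
  qed
  show "A_estimates nu (\<lambda>xi :: real ^ 'n. max (ftilde nu xi) (ftr nu 1))"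
    unfolding e2 by (rule main_est[OF assms]) simp
qed

end
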